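(* Assume $\int_{(0,1)}\upsilon^p\lambda(d\upsilon)<\infty$ for some $p\in(1,2)$ and $\int_{[1,\infty)}\upsilon\,\lambda(d\upsilon)<\infty$. Then for every $q\ge1$ there is a constant $\mathbf c_q$ with $\lim_{q\to\infty}\mathbf c_q=0$ such that for every $m\ge1$ and every $h\in(0,1)$, $$\int_{(0,q)^m}\mathbf 1_{\{\prod_{j=1}^m u_j\ge h\,q^m\}}\prod_{i=1}^m u_i\,\lambda(du_i)\le\frac{1}{p-1}\,\frac{(\mathbf c_q)^m h^{1-p}}{(m-1)!}\big[\log(2^m/h)\big]^{m-1}.$$ In particular, for every $\varepsilon\in(0,1)$, $$\int_{(0,q)^m}\mathbf 1_{\{\prod_{j=1}^m u_j\ge h\,q^m\}}\prod_{i=1}^m u_i\,\lambda(du_i)\le\frac{(2^{\varepsilon}\mathbf c_q/\varepsilon)^m}{p-1}\,h^{1-p-\varepsilon}.$$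
   Context: $\lambda$ is a positive measure on $(0,\infty)$ with $\lambda([a,\infty))<\infty$ for every $a>0$. *)

theory Defs
  imports "HOL-Analysis.Analysis"
begin

text \<open>The measure lambda on (0,infinity) is modelled as a Borel measure on the reals
  giving no mass to (-infinity,0] and finite mass to every [a,infinity), a > 0.\<close>

definition levy_like :: "real measure \<Rightarrow> bool" where
  "levy_like lam \<longleftrightarrow> sets lam = sets borel \<and> emeasure lam {..0} = 0 \<and>
     (\<forall>a>0. emeasure lam {a..} < \<infinity>)"

definition trunc_int :: "real measure \<Rightarrow> real \<Rightarrow> nat \<Rightarrow> real \<Rightarrow> ennreal" where
  "trunc_int lam q m h =
     (\<integral>\<^sup>+ u. indicator {u. (\<forall>i<m. 0 < u i \<and> u i < q) \<and> (\<Prod>j<m. u j) \<ge> h * q ^ m} u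
               * (\<Prod>i<m. ennreal (u i)) \<partial>(PiM {..<m} (\<lambda>_. lam)))"

end

theory Submission
  imports Defs
begin

lemma ln2_ge: "1 \<le> 2 * ln (2::real)"
proof -
  have "exp 1 \<le> (4::real)" using exp_le by simp
  hence "1 \<le> ln (4::real)" by (simp add: ln_ge_iff)
  also have "ln (4::real) = 2 * ln 2" using ln_realpow[of 2 2] by simp
  finally show ?thesis .
qed

lemma real_bound1:
  fixes a p h :: real and m :: nat
  assumes a: "0 \<le> a" and p: "1 < p" "p < 2" and m: "m \<ge> 1" and h: "0 < h" "h < 1"
  shows "h powr (1-p) * a^m \<le> 1 / (p - 1) * ((2*a) ^ m * h powr (1 - p) / fact (m - 1)) * (ln (2 ^ m / h)) ^ (m - 1)"
proof -
  define L where "L = ln (2 ^ m / h)"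
  have L: "real m * ln 2 \<le> L"
    using h by (simp add: L_def ln_div ln_realpow)
  have l2: "0 < ln (2::real)" by simp
  have L0: "0 \<le> L" using L l2 by (smt (verit) mult_nonneg_nonneg of_nat_0_le_iff)
  have "fact (m-1) \<le> real ((m-1)^(m-1))" by (rule fact_le_power)
  also have "\<dots> \<le> real m ^ (m-1)" by (simp add: power_mono)
  finally have F: "fact (m-1) \<le> real m ^ (m-1)" .
  have fpos: "0 < (fact (m-1)::real)" by simp
  have "ln 2 ^ (m-1) * fact (m-1) \<le> ln 2 ^ (m-1) * real m ^ (m-1)"
    using F l2 by (intro mult_left_mono) auto
  also have "\<dots> = (real m * ln 2)^(m-1)" by (simp add: power_mult_distrib)
  also have "\<dots> \<le> L^(m-1)" using L l2 by (intro power_mono) auto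
  finally have "ln 2 ^ (m-1) \<le> L^(m-1) / fact (m-1)" using fpos by (simp add: field_simps)
  hence K: "ln 2 ^ (m-1) \<le> L^(m-1) / fact (m-1)" .
  have "(2::real) ^ m = 2 * 2^(m-1)" using m by (cases m) auto
  hence "(2*a)^m * ln 2 ^ (m-1) = 2 * a^m * (2 * ln 2)^(m-1)" by (simp add: power_mult_distrib)
  also have "\<dots> \<ge> 2 * a^m"
  proof -
    have "1 \<le> (2 * ln (2::real))^(m-1)" using ln2_ge by (rule one_le_power)
    thus ?thesis using a by (simp add: mult_le_cancel_left1)
  qed
  finally have A: "2 * a^m \<le> (2*a)^m * ln 2 ^ (m-1)" .
  have hp: "0 < h powr (1-p)" using h by simp
  have "h powr (1-p) * a^m \<le> h powr (1-p) * (2 * a^m)" using hp a by simp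
  also have "\<dots> \<le> h powr (1-p) * ((2*a)^m * ln 2 ^ (m-1))" using A hp by simp
  also have "\<dots> \<le> h powr (1-p) * ((2*a)^m * (L^(m-1) / fact (m-1)))"
    using K hp a by (intro mult_left_mono) auto
  also have "\<dots> \<le> 1/(p-1) * (h powr (1-p) * ((2*a)^m * (L^(m-1) / fact (m-1))))"
  proof -
    have X: "0 \<le> h powr (1-p) * ((2*a)^m * (L^(m-1) / fact (m-1)))"
      using hp a L0 l2 by (intro mult_nonneg_nonneg) (auto intro!: divide_nonneg_pos zero_le_power)
    have Y: "1 \<le> 1/(p-1)" using p by simp
    show ?thesis using mult_right_mono[OF Y X] by simp
  qed
  also have "\<dots> = 1 / (p - 1) * ((2*a) ^ m * h powr (1 - p) / fact (m - 1)) * L ^ (m - 1)"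
    by simp
  finally show ?thesis unfolding L_def .
qed

lemma real_bound2:
  fixes a p h e :: real and m :: nat
  assumes a: "0 \<le> a" and p: "1 < p" "p < 2" and h: "0 < h" "h < 1" and e: "0 < e" "e < 1"
  shows "h powr (1-p) * a^m \<le> (2 powr e * (2*a) / e) ^ m / (p - 1) * h powr (1 - p - e)"
proof -
  have "1 \<le> 2 powr e" using e ge_one_powr_ge_zero[of 2 e] by simp
  moreover have "2 \<le> 2 / e" using e by (simp add: field_simps)
  ultimately have E: "1 \<le> 2 powr e * (2 / e)"
    using mult_mono[of 1 "2 powr e" 1 "2/e"] by simp
  have "a \<le> 2 powr e * (2*a) / e" using mult_right_mono[OF E a] by simp
  hence A: "a^m \<le> (2 powr e * (2*a) / e)^m" using a by (intro power_mono) auto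
  have "h powr (1-p) \<le> h powr (1-p-e)" using h e by (intro powr_mono') auto
  hence B: "h powr (1-p) * a^m \<le> h powr (1-p-e) * (2 powr e * (2*a) / e)^m"
    using A a by (intro mult_mono) auto
  have C: "0 \<le> h powr (1-p-e) * (2 powr e * (2*a) / e)^m" using a e by simp
  have Y: "1 \<le> 1/(p-1)" using p by simp
  have "h powr (1-p-e) * (2 powr e * (2*a) / e)^m \<le> 1/(p-1) * (h powr (1-p-e) * (2 powr e * (2*a) / e)^m)"
    using mult_right_mono[OF Y C] by simp
  moreover have "1/(p-1) * (h powr (1-p-e) * (2 powr e * (2*a) / e)^m) = (2 powr e * (2*a) / e) ^ m / (p - 1) * h powr (1 - p - e)"
    by (simp add: divide_inverse mult_ac)
  ultimately show ?thesis using B by linarith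
qed
lemma pointwise_bound:
  fixes u :: "nat \<Rightarrow> real" and q h p :: real
  assumes u: "\<forall>i<m. 0 < u i \<and> u i < q" and P: "(\<Prod>j<m. u j) \<ge> h * q ^ m"
    and h: "0 < h" and p: "1 < p" and q: "1 \<le> q"
  shows "(\<Prod>i<m. u i) \<le> h powr (1-p) * (\<Prod>i<m. u i * (u i / q) powr (p-1))"
proof -
  define X where "X = (\<Prod>i<m. u i) / q ^ m"
  have qm: "0 < q ^ m" using q by simp
  have Pp: "0 \<le> (\<Prod>i<m. u i)" using u by (intro prod_nonneg) auto
  have Xh: "h \<le> X" using P qm by (simp add: X_def field_simps)
  have "(\<Prod>i<m. u i * (u i / q) powr (p-1)) = (\<Prod>i<m. u i) * (\<Prod>i<m. (u i / q) powr (p-1))"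
    by (rule prod.distrib)
  also have "(\<Prod>i<m. (u i / q) powr (p-1)) = (\<Prod>i<m. u i / q) powr (p-1)"
    by (rule prod_powr_distrib[symmetric])
  also have "(\<Prod>i<m. u i / q) = X" by (simp add: X_def prod_dividef)
  finally have E: "(\<Prod>i<m. u i * (u i / q) powr (p-1)) = (\<Prod>i<m. u i) * X powr (p-1)" .
  have "h powr (p-1) \<le> X powr (p-1)" using h p Xh by (intro powr_mono2) auto
  hence "h powr (1-p) * h powr (p-1) \<le> h powr (1-p) * X powr (p-1)" by (intro mult_left_mono) auto
  moreover have "h powr (1-p) * h powr (p-1) = 1" using h by (simp add: powr_add[symmetric])
  ultimately have "1 \<le> h powr (1-p) * X powr (p-1)" by simp
  hence "(\<Prod>i<m. u i) * 1 \<le> (\<Prod>i<m. u i) * (h powr (1-p) * X powr (p-1))"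
    using Pp by (intro mult_left_mono) auto
  moreover have "h powr (1-p) * (\<Prod>i<m. u i * (u i / q) powr (p-1)) = (\<Prod>i<m. u i) * (h powr (1-p) * X powr (p-1))"
    unfolding E by (simp only: mult_ac)
  ultimately show ?thesis by linarith
qed

lemma sigma_finite_levy:
  assumes "levy_like lam" shows "sigma_finite_measure lam"
proof
  from assms have sets_eq: "sets lam = sets borel" and fin: "\<And>a. a > 0 \<Longrightarrow> emeasure lam {a..} < \<infinity>"
    and z: "emeasure lam {..0} = 0" unfolding levy_like_def by auto
  have sp: "space lam = UNIV" using sets_eq_imp_space_eq[OF sets_eq] by simp
  let ?A = "insert {..0::real} (range (\<lambda>n::nat. {inverse (real (Suc n))..}))"
  show "\<exists>A. countable A \<and> A \<subseteq> sets lam \<and> \<Union>A = space lam \<and> (\<forall>a\<in>A. emeasure lam a \<noteq> \<infinity>)"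
  proof (intro exI[of _ ?A] conjI)
    show "countable ?A" by (intro countable_insert countable_image) (rule countableI_type)
    show "?A \<subseteq> sets lam" unfolding sets_eq by auto
    show "\<Union>?A = space lam"
    proof -
      have "x \<in> \<Union>?A" for x :: real
      proof (cases "x \<le> 0")
        case False
        then obtain n where "inverse (real (Suc n)) < x" using reals_Archimedean[of x] by auto
        hence "x \<in> {inverse (real (Suc n))..}" by simp
        thus ?thesis by blast
      qed auto
      thus ?thesis using sp by auto
    qed
    have "emeasure lam {inverse (real (Suc n))..} \<noteq> \<infinity>" for n
      using fin[of "inverse (real (Suc n))"] by simp
    thus "\<forall>a\<in>?A. emeasure lam a \<noteq> \<infinity>" using z by auto
  qed
qed

theorem lemma4p7:
  fixes lam :: "real measure" and p :: real
  assumes "levy_like lam"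
    and "1 < p" and "p < 2"
    and "(\<integral>\<^sup>+ v. indicator {0<..<1} v * ennreal (v powr p) \<partial>lam) < \<infinity>"
    and "(\<integral>\<^sup>+ v. indicator {1..} v * ennreal v \<partial>lam) < \<infinity>"
  shows "\<exists>c :: real \<Rightarrow> real. (c \<longlongrightarrow> 0) at_top \<and> (\<forall>q\<ge>1. 0 \<le> c q) \<and>
    (\<forall>q\<ge>1. \<forall>m\<ge>1. \<forall>h. 0 < h \<and> h < 1 \<longrightarrow>
       trunc_int lam q m h \<le> ennreal (1 / (p - 1) * (c q ^ m * h powr (1 - p) / fact (m - 1))
                                     * (ln (2 ^ m / h)) ^ (m - 1))
     \<and> (\<forall>\<epsilon>. 0 < \<epsilon> \<and> \<epsilon> < 1 \<longrightarrow>
       trunc_int lam q m h \<le> ennreal ((2 powr \<epsilon> * c q / \<epsilon>) ^ m / (p - 1) * h powr (1 - p - \<epsilon>))))"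
proof -
  from assms(1) have sets_eq: "sets lam = sets borel" unfolding levy_like_def by auto
  have meas: "\<And>N. measurable lam N = measurable borel N" using measurable_cong_sets[OF sets_eq refl] .
  have sp: "space lam = UNIV" using sets_eq_imp_space_eq[OF sets_eq] by simp
  interpret sf: sigma_finite_measure lam by (rule sigma_finite_levy[OF assms(1)])
  interpret ps: product_sigma_finite "\<lambda>_. lam" by unfold_locales
  define f where "f q u = (if 0 < u then u * min 1 (u/q) powr (p-1) else 0)" for q u :: real
  define w where "w u = (if 0 < u \<and> u < 1 then u powr p else 0) + (if 1 \<le> u then u else 0)" for u :: real
  have fmb: "f q \<in> borel_measurable borel" for q unfolding f_def by measurable
  have fm[measurable]: "f q \<in> borel_measurable lam" for q unfolding meas by (rule fmb)
  have wmb: "w \<in> borel_measurable borel" unfolding w_def by measurable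
  have wm[measurable]: "w \<in> borel_measurable lam" unfolding meas by (rule wmb)
  have f0: "0 \<le> f q u" for q u unfolding f_def by auto
  have w0: "0 \<le> w u" for u unfolding w_def by auto
  have fw: "f q u \<le> w u" if q: "1 \<le> q" for q u
  proof -
    consider "u \<le> 0" | "0 < u" "u < 1" | "1 \<le> u" by linarith
    thus ?thesis
    proof cases
      case 1 thus ?thesis using w0 by (simp add: f_def)
    next
      case 2
      have uq: "u / q \<le> u" using 2 q by (simp add: divide_le_eq mult_le_cancel_left1)
      have mn: "min 1 (u/q) = u/q" using uq 2 by simp
      have "(u/q) powr (p-1) \<le> u powr (p-1)" using uq 2 q assms(2) by (intro powr_mono2) auto
      hence "u * (u/q) powr (p-1) \<le> u * u powr (p-1)" using 2 by (intro mult_left_mono) auto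
      also have "u * u powr (p-1) = u powr p" using 2 by (simp add: powr_mult_base)
      finally show ?thesis using 2 by (simp add: f_def w_def mn)
    next
      case 3
      have "min 1 (u/q) powr (p-1) \<le> 1" using 3 q assms(2) by (intro powr_le1) auto
      hence "u * min 1 (u/q) powr (p-1) \<le> u * 1" using 3 by (intro mult_left_mono) auto
      thus ?thesis using 3 by (simp add: f_def w_def)
    qed
  qed
  have wint: "integrable lam w"
  proof (rule integrableI_nonneg)
    show "w \<in> borel_measurable lam" by (rule wm)
    show "AE x in lam. 0 \<le> w x" using w0 by simp
    have "(\<integral>\<^sup>+x. ennreal (w x) \<partial>lam) = (\<integral>\<^sup>+x. indicator {0<..<1} x * ennreal (x powr p) + indicator {1..} x * ennreal x \<partial>lam)"
      by (rule nn_integral_cong) (auto simp: w_def indicator_def)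
    also have "\<dots> = (\<integral>\<^sup>+ v. indicator {0<..<1} v * ennreal (v powr p) \<partial>lam) + (\<integral>\<^sup>+ v. indicator {1..} v * ennreal v \<partial>lam)"
      by (rule nn_integral_add) (auto simp: meas)
    also have "\<dots> < \<infinity>" using assms(4,5) by simp
    finally show "(\<integral>\<^sup>+x. ennreal (w x) \<partial>lam) < \<infinity>" .
  qed
  define a where "a q = (\<integral>u. f q u \<partial>lam)" for q
  have a0: "0 \<le> a q" for q unfolding a_def using f0 by (simp add: integral_nonneg)
  have lim: "((\<lambda>q. \<integral>u. f q u \<partial>lam) \<longlongrightarrow> (\<integral>u. 0 \<partial>lam)) at_top"
  proof (rule integral_dominated_convergence_at_top[where w=w])
    show "(\<lambda>u. 0::real) \<in> borel_measurable lam" by simp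
    show "f t \<in> borel_measurable lam" for t by (rule fm)
    show "integrable lam w" by (rule wint)
    show "AE x in lam. ((\<lambda>i. f i x) \<longlongrightarrow> 0) at_top"
    proof (rule AE_I2)
      fix u :: real
      show "((\<lambda>i. f i u) \<longlongrightarrow> 0) at_top"
      proof (cases "0 < u")
        case False thus ?thesis by (simp add: f_def)
      next
        case True
        have ev: "eventually (\<lambda>q. u * (u powr (p-1) * q powr (1-p)) = f q u) at_top"
          using eventually_ge_at_top[of u]
        proof eventually_elim
          case (elim q)
          have qp: "0 < q" using elim True by linarith
          have mn: "min 1 (u/q) = u/q" using elim qp by simp
          have "(u/q) powr (p-1) = u powr (p-1) / q powr (p-1)" using True qp by (simp add: powr_divide)
          also have "\<dots> = u powr (p-1) * q powr (1-p)" 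
          proof -
            have "q powr (1-p) = q powr (-(p-1))" by simp
            also have "\<dots> = inverse (q powr (p-1))" by (rule powr_minus)
            finally show ?thesis by (simp add: divide_inverse)
          qed
          finally show ?case using True by (simp add: f_def mn)
        qed
        have "((\<lambda>q. q powr (1-p)) \<longlongrightarrow> 0) at_top"
          using assms(2) by (intro tendsto_neg_powr filterlim_ident) auto
        hence "((\<lambda>q. u * (u powr (p-1) * q powr (1-p))) \<longlongrightarrow> u * (u powr (p-1) * 0)) at_top"
          by (intro tendsto_mult tendsto_const)
        hence "((\<lambda>q. u * (u powr (p-1) * q powr (1-p))) \<longlongrightarrow> 0) at_top" by simp
        thus ?thesis using ev by (rule Lim_transform_eventually)
      qed
    qed
    show "\<forall>\<^sub>F i in at_top. AE x in lam. norm (f i x) \<le> w x"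
    proof (rule eventually_mono[OF eventually_ge_at_top[of "1::real"]])
      fix i :: real assume i1: "1 \<le> i"
      show "AE x in lam. norm (f i x) \<le> w x"
        using fw[OF i1] f0 by (intro AE_I2) (simp add: abs_of_nonneg)
    qed
  qed
  define c where "c q = 2 * a q" for q
  have climit: "(c \<longlongrightarrow> 0) at_top"
  proof -
    have "((\<lambda>q. 2 * a q) \<longlongrightarrow> 2 * 0) at_top"
      using lim unfolding a_def by (intro tendsto_mult tendsto_const) simp
    thus ?thesis unfolding c_def by simp
  qed
  have core: "trunc_int lam q m h \<le> ennreal (h powr (1-p) * a q ^ m)"
    if q: "1 \<le> q" and h: "0 < h" for q h m
  proof -
    have fint: "integrable lam (f q)"
      by (rule Bochner_Integration.integrable_bound[OF wint]) (use fw[OF q] f0 w0 in auto)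
    have nnf: "(\<integral>\<^sup>+u. ennreal (f q u) \<partial>lam) = ennreal (a q)"
      using nn_integral_eq_integral[OF fint] f0 by (simp add: a_def)
    have pw: "indicator {u. (\<forall>i<m. 0 < u i \<and> u i < q) \<and> (\<Prod>j<m. u j) \<ge> h * q ^ m} u
               * (\<Prod>i<m. ennreal (u i)) \<le> ennreal (h powr (1-p)) * (\<Prod>i<m. ennreal (f q (u i)))" for u
    proof (cases "(\<forall>i<m. 0 < u i \<and> u i < q) \<and> (\<Prod>j<m. u j) \<ge> h * q ^ m")
      case True
      hence U: "\<forall>i<m. 0 < u i \<and> u i < q" and P: "(\<Prod>j<m. u j) \<ge> h * q ^ m" by auto
      have fe: "f q (u i) = u i * (u i / q) powr (p-1)" if "i < m" for i
      proof -
        have "0 < u i" "u i < q" using U that by auto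
        hence "min 1 (u i / q) = u i / q" by simp
        thus ?thesis using \<open>0 < u i\<close> by (simp add: f_def)
      qed
      have R: "(\<Prod>i<m. u i) \<le> h powr (1-p) * (\<Prod>i<m. u i * (u i / q) powr (p-1))"
        by (rule pointwise_bound[OF U P h assms(2) q])
      have "(\<Prod>i<m. ennreal (u i)) = ennreal (\<Prod>i<m. u i)"
        using U by (intro prod_ennreal) auto
      also have "\<dots> \<le> ennreal (h powr (1-p) * (\<Prod>i<m. u i * (u i / q) powr (p-1)))"
        using R by (rule ennreal_leI)
      also have "\<dots> = ennreal (h powr (1-p)) * ennreal (\<Prod>i<m. f q (u i))"
      proof -
        have pe: "(\<Prod>i<m. f q (u i)) = (\<Prod>i<m. u i * (u i / q) powr (p-1))"
          by (rule prod.cong) (simp_all add: fe)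
        have "0 \<le> (\<Prod>i<m. f q (u i))" using f0 by (simp add: prod_nonneg)
        thus ?thesis unfolding pe by (intro ennreal_mult) auto
      qed
      also have "ennreal (\<Prod>i<m. f q (u i)) = (\<Prod>i<m. ennreal (f q (u i)))"
        using f0 by (intro prod_ennreal[symmetric]) auto
      finally show ?thesis using True by simp
    next
      case False thus ?thesis by simp
    qed
    have "trunc_int lam q m h \<le> (\<integral>\<^sup>+u. ennreal (h powr (1-p)) * (\<Prod>i<m. ennreal (f q (u i))) \<partial>PiM {..<m} (\<lambda>_. lam))"
      unfolding trunc_int_def by (rule nn_integral_mono) (rule pw)
    also have "\<dots> = ennreal (h powr (1-p)) * (\<integral>\<^sup>+u. (\<Prod>i<m. ennreal (f q (u i))) \<partial>PiM {..<m} (\<lambda>_. lam))"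
      by (rule nn_integral_cmult) measurable
    also have "(\<integral>\<^sup>+u. (\<Prod>i<m. ennreal (f q (u i))) \<partial>PiM {..<m} (\<lambda>_. lam)) = (\<Prod>i<m. \<integral>\<^sup>+x. ennreal (f q x) \<partial>lam)"
      using ps.product_nn_integral_prod[of "{..<m}" "\<lambda>i x. ennreal (f q x)"] by simp
    also have "\<dots> = ennreal (a q) ^ m" using nnf by simp
    also have "ennreal (h powr (1-p)) * ennreal (a q) ^ m = ennreal (h powr (1-p) * a q ^ m)"
      using a0 by (simp add: ennreal_power ennreal_mult)
    finally show ?thesis .
  qed
  show ?thesis
  proof (intro exI[of _ c] conjI allI impI)
    show "(c \<longlongrightarrow> 0) at_top" by (rule climit)
    show "0 \<le> c q" for q using a0 by (simp add: c_def)
    fix q h :: real and m :: nat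
    assume q: "1 \<le> q" and m: "1 \<le> m" and h: "0 < h \<and> h < 1"
    show "trunc_int lam q m h \<le> ennreal (1 / (p - 1) * (c q ^ m * h powr (1 - p) / fact (m - 1))
                                     * (ln (2 ^ m / h)) ^ (m - 1))"
    proof -
      have "h powr (1-p) * a q ^ m \<le> 1 / (p - 1) * (c q ^ m * h powr (1 - p) / fact (m - 1))
                                     * (ln (2 ^ m / h)) ^ (m - 1)"
        unfolding c_def using h by (intro real_bound1[OF a0 assms(2,3) m]) auto
      hence "ennreal (h powr (1-p) * a q ^ m) \<le> ennreal (1 / (p - 1) * (c q ^ m * h powr (1 - p) / fact (m - 1))
                                     * (ln (2 ^ m / h)) ^ (m - 1))" by (rule ennreal_leI)
      with core[OF q, of h m] h show ?thesis by (meson order_trans)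
    qed
    fix e :: real assume e: "0 < e \<and> e < 1"
    show "trunc_int lam q m h \<le> ennreal ((2 powr e * c q / e) ^ m / (p - 1) * h powr (1 - p - e))"
    proof -
      have "h powr (1-p) * a q ^ m \<le> (2 powr e * c q / e) ^ m / (p - 1) * h powr (1 - p - e)"
        unfolding c_def using h e by (intro real_bound2[OF a0 assms(2,3)]) auto
      hence "ennreal (h powr (1-p) * a q ^ m) \<le> ennreal ((2 powr e * c q / e) ^ m / (p - 1) * h powr (1 - p - e))" by (rule ennreal_leI)
      with core[OF q, of h m] h show ?thesis by (meson order_trans)
    qed
  qed
qed

end
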